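(* Let $n\ge 3$ and $\varphi$ a linear functional with $\varphi(e_i)=a_i$, $0<a_1<\dots<a_n$. The flip graph of $\varphi$-monotone paths on $\diamond^n$ has diameter $2(n-1)$.
   Context: $\diamond^n=\mathrm{conv}\{\pm e_1,\dots,\pm e_n\}$. A monotone path is a sequence of vertices $-e_n=v_0,\dots,v_m=e_n$ with $v_{j-1}\neq -v_j$ and $\varphi(v_{j-1})<\varphi(v_j)$. The flip graph has the monotone paths as vertices, two paths being adjacent when they differ by a polygon flip across a 2-face; since the 2-faces of $\diamond^n$ ($n\ge3$) are triangles, this means one path is obtained from the other by inserting or deleting a single vertex. *)

theory Defs
  imports Main "HOL-Library.Extended_Nat"
begin

text \<open>Vertices of the cross-polytope in dimension n are encoded as nonzero integers:
  the integer i (1 \<le> i \<le> n) stands for e_i and -i stands for -e_i.\<close>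

definition cross_vertices :: "nat \<Rightarrow> int set" where
  "cross_vertices n = {v. v \<noteq> 0 \<and> \<bar>v\<bar> \<le> int n}"

definition phi :: "(nat \<Rightarrow> real) \<Rightarrow> int \<Rightarrow> real" where
  "phi a v = (if v > 0 then a (nat v) else - a (nat (- v)))"

text \<open>Monotone paths: vertex sequences from -e_n to e_n, consecutive vertices not antipodal
  (i.e. joined by an edge) and phi strictly increasing.\<close>

definition monotone_path :: "(nat \<Rightarrow> real) \<Rightarrow> nat \<Rightarrow> int list \<Rightarrow> bool" where
  "monotone_path a n p \<longleftrightarrow>
     p \<noteq> [] \<and> hd p = - int n \<and> last p = int n \<and>
     set p \<subseteq> cross_vertices n \<and>
     successively (\<lambda>u w. u \<noteq> - w \<and> phi a u < phi a w) p"

definition flip_adj :: "(nat \<Rightarrow> real) \<Rightarrow> nat \<Rightarrow> int list \<Rightarrow> int list \<Rightarrow> bool" where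
  "flip_adj a n p q \<longleftrightarrow> monotone_path a n p \<and> monotone_path a n q \<and>
     (\<exists>xs ys w. (p = xs @ ys \<and> q = xs @ w # ys) \<or> (q = xs @ ys \<and> p = xs @ w # ys))"

text \<open>Graph distance (infinite if not connected) and diameter of the flip graph.\<close>

definition flip_dist :: "(nat \<Rightarrow> real) \<Rightarrow> nat \<Rightarrow> int list \<Rightarrow> int list \<Rightarrow> enat" where
  "flip_dist a n p q = (INF k \<in> {k. (flip_adj a n ^^ k) p q}. enat k)"

definition flip_diameter :: "(nat \<Rightarrow> real) \<Rightarrow> nat \<Rightarrow> enat" where
  "flip_diameter a n =
     (SUP (p, q) \<in> {(p, q). monotone_path a n p \<and> monotone_path a n q}. flip_dist a n p q)"

end

theory Submission
  imports Defs
begin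

lemma succ_sorted:
  fixes xs :: "int list"
  assumes "sorted_wrt (<) xs"
  shows "successively Q xs \<longleftrightarrow>
    (\<forall>u\<in>set xs. \<forall>w\<in>set xs. u < w \<longrightarrow> (\<forall>x\<in>set xs. \<not>(u < x \<and> x < w)) \<longrightarrow> Q u w)"
  using assms
proof (induction xs rule: induct_list012)
  case (3 x y zs)
  have s: "sorted_wrt (<) (y # zs)" using "3.prems" by simp
  have xy: "x < y" and xz: "\<forall>z\<in>set zs. x < z" and yz: "\<forall>z\<in>set zs. y < z" using "3.prems" by auto
  show ?case
  proof
    assume L: "successively Q (x # y # zs)"
    then have Qxy: "Q x y" and Ls: "successively Q (y # zs)" by auto
    have R: "\<forall>u\<in>set (y#zs). \<forall>w\<in>set (y#zs). u < w \<longrightarrow> (\<forall>x\<in>set (y#zs). \<not>(u < x \<and> x < w)) \<longrightarrow> Q u w"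
      using "3.IH"(2)[OF s] Ls by blast
    show "\<forall>u\<in>set (x # y # zs). \<forall>w\<in>set (x # y # zs). u < w \<longrightarrow> (\<forall>v\<in>set (x # y # zs). \<not>(u < v \<and> v < w)) \<longrightarrow> Q u w"
    proof (intro ballI impI)
      fix u w assume u: "u \<in> set (x # y # zs)" and w: "w \<in> set (x # y # zs)" and uw: "u < w"
        and nb: "\<forall>v\<in>set (x # y # zs). \<not>(u < v \<and> v < w)"
      show "Q u w"
      proof (cases "u = x")
        case True
        then have "w = y" using w uw nb xy yz by auto
        then show ?thesis using True Qxy by simp
      next
        case False
        then have "u \<in> set (y#zs)" using u by simp
        moreover have "w \<in> set (y#zs)" using w uw False u xy xz by auto
        ultimately show ?thesis using R uw nb by auto
      qed
    qed
  next
    assume R: "\<forall>u\<in>set (x # y # zs). \<forall>w\<in>set (x # y # zs). u < w \<longrightarrow> (\<forall>v\<in>set (x # y # zs). \<not>(u < v \<and> v < w)) \<longrightarrow> Q u w"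
    have nb: "\<forall>v\<in>set (x # y # zs). \<not>(x < v \<and> v < y)" using yz by auto
    have "Q x y" using R xy nb by simp
    moreover have "\<forall>u\<in>set (y#zs). \<forall>w\<in>set (y#zs). u < w \<longrightarrow> (\<forall>v\<in>set (y#zs). \<not>(u < v \<and> v < w)) \<longrightarrow> Q u w"
    proof (intro ballI impI)
      fix u w assume u: "u \<in> set (y#zs)" and w: "w \<in> set (y#zs)" and uw: "u < w"
        and nb2: "\<forall>v\<in>set (y#zs). \<not>(u < v \<and> v < w)"
      have "\<forall>v\<in>set (x#y#zs). \<not>(u < v \<and> v < w)" using nb2 u xy xz by auto
      moreover have "u \<in> set (x#y#zs)" "w \<in> set (x#y#zs)" using u w by auto
      ultimately show "Q u w" using R uw by blast
    qed
    then have "successively Q (y # zs)"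
      using "3.IH"(2)[OF s] by blast
    ultimately show "successively Q (x # y # zs)" by simp
  qed
qed auto

definition good :: "nat \<Rightarrow> int set \<Rightarrow> bool" where
  "good n F \<longleftrightarrow> F \<subseteq> cross_vertices n \<and> - int n \<in> F \<and> int n \<in> F \<and>
     (\<forall>i>0. -i \<in> F \<longrightarrow> i \<in> F \<longrightarrow> (\<exists>x\<in>F. -i < x \<and> x < i))"

lemma finite_cross: "finite (cross_vertices n)"
proof -
  have "cross_vertices n \<subseteq> {- int n..int n}" unfolding cross_vertices_def by auto
  then show ?thesis by (rule finite_subset) simp
qed

lemma a_less_iff:
  fixes a :: "nat \<Rightarrow> real"
  assumes mono: "\<And>i j. 1 \<le> i \<Longrightarrow> i < j \<Longrightarrow> j \<le> n \<Longrightarrow> a i < a j"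
    and "1 \<le> i" "i \<le> n" "1 \<le> j" "j \<le> n"
  shows "a i < a j \<longleftrightarrow> i < j"
proof
  assume "a i < a j"
  show "i < j"
  proof (rule ccontr)
    assume "\<not> i < j"
    then have "j = i \<or> j < i" by auto
    moreover have "j < i \<Longrightarrow> a j < a i" using mono[of j i] assms by blast
    ultimately show False using \<open>a i < a j\<close> by force
  qed
qed (use assms in auto)

lemma a_pos:
  fixes a :: "nat \<Rightarrow> real"
  assumes pos: "0 < a 1" and mono: "\<And>i j. 1 \<le> i \<Longrightarrow> i < j \<Longrightarrow> j \<le> n \<Longrightarrow> a i < a j"
    and "1 \<le> i" "i \<le> n"
  shows "0 < a i"
proof (cases "i = 1")
  case False
  then have "1 < i" using assms by auto
  then have "a 1 < a i" using mono[of 1 i] assms by blast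
  then show ?thesis using pos by linarith
qed (use pos in simp)

lemma phi_less_iff:
  fixes a :: "nat \<Rightarrow> real"
  assumes pos: "0 < a 1" and mono: "\<And>i j. 1 \<le> i \<Longrightarrow> i < j \<Longrightarrow> j \<le> n \<Longrightarrow> a i < a j"
    and v: "v \<in> cross_vertices n" and w: "w \<in> cross_vertices n"
  shows "phi a v < phi a w \<longleftrightarrow> v < w"
proof -
  have av: "0 < a (nat \<bar>v\<bar>)" and aw: "0 < a (nat \<bar>w\<bar>)"
    using v w a_pos[where n=n and a=a, OF pos mono] unfolding cross_vertices_def by auto
  have vb: "1 \<le> nat \<bar>v\<bar>" "nat \<bar>v\<bar> \<le> n" and wb: "1 \<le> nat \<bar>w\<bar>" "nat \<bar>w\<bar> \<le> n"
    using v w unfolding cross_vertices_def by auto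
  have iff: "a (nat \<bar>v\<bar>) < a (nat \<bar>w\<bar>) \<longleftrightarrow> nat \<bar>v\<bar> < nat \<bar>w\<bar>"
    and iff2: "a (nat \<bar>w\<bar>) < a (nat \<bar>v\<bar>) \<longleftrightarrow> nat \<bar>w\<bar> < nat \<bar>v\<bar>"
    using a_less_iff[where a=a and n=n and i="nat \<bar>v\<bar>" and j="nat \<bar>w\<bar>", OF mono]
      a_less_iff[where a=a and n=n and j="nat \<bar>v\<bar>" and i="nat \<bar>w\<bar>", OF mono] vb wb by auto
  have v0: "v \<noteq> 0" and w0: "w \<noteq> 0" using v w unfolding cross_vertices_def by auto
  show ?thesis
  proof (cases "v > 0")
    case True
    show ?thesis
    proof (cases "w > 0")
      case True
      then show ?thesis using \<open>v > 0\<close> iff unfolding phi_def by auto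
    next
      case False
      then have "w < 0" using w0 by auto
      then show ?thesis using \<open>v > 0\<close> av aw unfolding phi_def by auto
    qed
  next
    case False
    then have "v < 0" using v0 by auto
    show ?thesis
    proof (cases "w > 0")
      case True
      then show ?thesis using \<open>v < 0\<close> av aw unfolding phi_def by auto
    next
      case False
      then have "w < 0" using w0 by auto
      have "nat \<bar>v\<bar> = nat (-v)" "nat \<bar>w\<bar> = nat (-w)" using \<open>v<0\<close> \<open>w<0\<close> by auto
      then show ?thesis using \<open>v < 0\<close> \<open>w < 0\<close> iff2 unfolding phi_def by auto
    qed
  qed
qed

lemma successively_conj:
  "successively (\<lambda>u w. P u w \<and> R u w) xs \<longleftrightarrow> successively P xs \<and> successively R xs"
  by (induction xs rule: induct_list012) auto

lemma hd_sorted_min: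
  fixes xs :: "int list"
  assumes "sorted_wrt (<) xs" "v \<in> set xs" "\<forall>x\<in>set xs. v \<le> x"
  shows "hd xs = v"
proof (cases xs)
  case Nil then show ?thesis using assms by simp
next
  case (Cons y ys)
  have "v = y"
  proof (rule ccontr)
    assume "v \<noteq> y"
    then have "v \<in> set ys" using assms Cons by simp
    then have "y < v" using assms(1) Cons by simp
    moreover have "v \<le> y" using assms(3) Cons by simp
    ultimately show False by simp
  qed
  then show ?thesis using Cons by simp
qed

lemma last_sorted_max:
  fixes xs :: "int list"
  assumes "sorted_wrt (<) xs" "v \<in> set xs" "\<forall>x\<in>set xs. x \<le> v"
  shows "last xs = v"
proof (cases xs rule: rev_exhaust)
  case Nil then show ?thesis using assms by simp
next
  case (snoc ys y)
  have "v = y"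
  proof (rule ccontr)
    assume "v \<noteq> y"
    then have "v \<in> set ys" using assms snoc by simp
    then have "v < y" using assms(1) snoc by (simp add: sorted_wrt_append)
    moreover have "y \<le> v" using assms(3) snoc by simp
    ultimately show False by simp
  qed
  then show ?thesis using snoc by simp
qed

lemma mono_char:
  fixes a :: "nat \<Rightarrow> real"
  assumes pos: "0 < a 1" and mono: "\<And>i j. 1 \<le> i \<Longrightarrow> i < j \<Longrightarrow> j \<le> n \<Longrightarrow> a i < a j"
    and n: "n \<ge> 1"
  shows "monotone_path a n p \<longleftrightarrow> sorted_wrt (<) p \<and> good n (set p)"
proof
  assume M: "monotone_path a n p"
  then have sub: "set p \<subseteq> cross_vertices n" unfolding monotone_path_def by simp
  have pl: "\<And>x y. x \<in> set p \<Longrightarrow> y \<in> set p \<Longrightarrow> (phi a x < phi a y) = (x < y)"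
    using phi_less_iff[where n=n and a=a, OF pos mono] sub by blast
  have "successively (\<lambda>u w. u \<noteq> - w \<and> phi a u < phi a w) p" using M unfolding monotone_path_def by simp
  also have "?this \<longleftrightarrow> successively (\<lambda>u w. u \<noteq> - w \<and> u < w) p"
    using pl by (intro successively_cong) simp_all
  finally have S: "successively (\<lambda>u w. u \<noteq> - w) p" "successively (<) p"
    unfolding successively_conj by blast+
  have sw: "sorted_wrt (<) p" using S(2) by (simp add: successively_conv_sorted_wrt)
  have ne: "p \<noteq> []" "hd p = - int n" "last p = int n" using M unfolding monotone_path_def by auto
  have hn: "- int n \<in> set p" "int n \<in> set p" using hd_in_set[OF ne(1)] last_in_set[OF ne(1)] ne by auto
  have C: "\<forall>u\<in>set p. \<forall>w\<in>set p. u < w \<longrightarrow> (\<forall>x\<in>set p. \<not>(u < x \<and> x < w)) \<longrightarrow> u \<noteq> - w"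
    using S(1) succ_sorted[OF sw, of "\<lambda>u w. u \<noteq> - w"] by simp
  have "\<forall>i>0. -i \<in> set p \<longrightarrow> i \<in> set p \<longrightarrow> (\<exists>x\<in>set p. -i < x \<and> x < i)"
  proof (intro allI impI)
    fix i :: int assume "i > 0" "-i \<in> set p" "i \<in> set p"
    have "-i < i" using \<open>i>0\<close> by simp
    have "\<not> (\<forall>x\<in>set p. \<not>(-i < x \<and> x < i))"
    proof
      assume nb: "\<forall>x\<in>set p. \<not>(-i < x \<and> x < i)"
      have "-i \<noteq> - i" using C \<open>-i \<in> set p\<close> \<open>i \<in> set p\<close> \<open>-i < i\<close> nb by blast
      then show False by simp
    qed
    then show "\<exists>x\<in>set p. -i < x \<and> x < i" by blast
  qed
  then show "sorted_wrt (<) p \<and> good n (set p)" using sw sub hn unfolding good_def by blast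
next
  assume A: "sorted_wrt (<) p \<and> good n (set p)"
  then have sw: "sorted_wrt (<) p" and sub: "set p \<subseteq> cross_vertices n"
    and hn: "- int n \<in> set p" "int n \<in> set p"
    and G: "\<forall>i>0. -i \<in> set p \<longrightarrow> i \<in> set p \<longrightarrow> (\<exists>x\<in>set p. -i < x \<and> x < i)"
    unfolding good_def by auto
  have bnd: "\<forall>x\<in>set p. - int n \<le> x \<and> x \<le> int n" using sub unfolding cross_vertices_def by auto
  have ne: "p \<noteq> []" using hn by auto
  have hd: "hd p = - int n" using hd_sorted_min[OF sw hn(1)] bnd by auto
  have lst: "last p = int n" using last_sorted_max[OF sw hn(2)] bnd by auto
  have S2: "successively (<) p" using sw by (simp add: successively_conv_sorted_wrt)
  have S1: "successively (\<lambda>u w. u \<noteq> - w) p"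
    unfolding succ_sorted[OF sw]
  proof (intro ballI impI)
    fix u w assume u: "u \<in> set p" and w: "w \<in> set p" and uw: "u < w"
      and nb: "\<forall>x\<in>set p. \<not> (u < x \<and> x < w)"
    show "u \<noteq> - w"
    proof
      assume "u = - w"
      then have "w > 0" "- w \<in> set p" using uw u by auto
      then obtain x where "x \<in> set p" "-w < x" "x < w" using G w by blast
      then show False using nb \<open>u = -w\<close> by auto
    qed
  qed
  have pl: "\<And>x y. x \<in> set p \<Longrightarrow> y \<in> set p \<Longrightarrow> (phi a x < phi a y) = (x < y)"
    using phi_less_iff[where n=n and a=a, OF pos mono] sub by blast
  have "successively (\<lambda>u w. u \<noteq> - w \<and> u < w) p" using S1 S2 unfolding successively_conj by blast
  also have "?this \<longleftrightarrow> successively (\<lambda>u w. u \<noteq> - w \<and> phi a u < phi a w) p"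
    using pl by (intro successively_cong) simp_all
  finally show "monotone_path a n p" using ne hd lst sub unfolding monotone_path_def by blast
qed

lemma good_finite: "good n F \<Longrightarrow> finite F"
  unfolding good_def using finite_cross finite_subset by blast

lemma sl_mono:
  fixes a :: "nat \<Rightarrow> real"
  assumes pos: "0 < a 1" and mono: "\<And>i j. 1 \<le> i \<Longrightarrow> i < j \<Longrightarrow> j \<le> n \<Longrightarrow> a i < a j"
    and n: "n \<ge> 1" and g: "good n F"
  shows "monotone_path a n (sorted_list_of_set F)"
proof -
  have fin: "finite F" using good_finite[OF g] .
  have "sorted_wrt (<) (sorted_list_of_set F) \<and> good n (set (sorted_list_of_set F))"
    using fin g by simp
  then show ?thesis using mono_char[where a=a and n=n, OF pos mono n] by blast
qed

lemma sl_set: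
  fixes a :: "nat \<Rightarrow> real"
  assumes pos: "0 < a 1" and mono: "\<And>i j. 1 \<le> i \<Longrightarrow> i < j \<Longrightarrow> j \<le> n \<Longrightarrow> a i < a j"
    and n: "n \<ge> 1" and M: "monotone_path a n p"
  shows "sorted_list_of_set (set p) = p" "good n (set p)"
proof -
  have sw: "sorted_wrt (<) p" and g: "good n (set p)" using M mono_char[where a=a and n=n, OF pos mono n] by auto
  have "distinct p" using sw strict_sorted_iff by blast
  then have "length p = card (set p)" by (simp add: distinct_card)
  then show "sorted_list_of_set (set p) = p" using sw sorted_list_of_set_unique[of "set p" p] by simp
  show "good n (set p)" using g .
qed

lemma insort_split: "\<exists>xs ys. l = xs @ ys \<and> insort_key f x l = xs @ x # ys"
proof (induction l)
  case Nil
  then show ?case by simp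
next
  case (Cons y l)
  show ?case
  proof (cases "f x \<le> f y")
    case True
    then show ?thesis by (intro exI[of _ "[]"] exI[of _ "y # l"]) simp
  next
    case False
    from Cons obtain xs ys where "l = xs @ ys" "insort_key f x l = xs @ x # ys" by blast
    then show ?thesis using False by (intro exI[of _ "y # xs"] exI[of _ ys]) simp
  qed
qed

definition sadj :: "nat \<Rightarrow> int set \<Rightarrow> int set \<Rightarrow> bool" where
  "sadj n F G \<longleftrightarrow> good n F \<and> good n G \<and> (\<exists>w. (w \<notin> F \<and> G = insert w F) \<or> (w \<notin> G \<and> F = insert w G))"

lemma sadj_sym: "sadj n F G \<Longrightarrow> sadj n G F"
  unfolding sadj_def by blast

lemma sl_insert_split:
  assumes "finite F" "w \<notin> F"
  shows "\<exists>xs ys. sorted_list_of_set F = xs @ ys \<and> sorted_list_of_set (insert w F) = xs @ w # ys"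
proof -
  have e: "sorted_list_of_set (insert w F) = insort w (sorted_list_of_set F)"
    using sorted_list_of_set_insert assms by blast
  obtain xs ys where "sorted_list_of_set F = xs @ ys" "insort w (sorted_list_of_set F) = xs @ w # ys"
    using insort_split[of "sorted_list_of_set F" "\<lambda>x. x" w] by blast
  then show ?thesis using e by metis
qed

lemma sadj_flip:
  fixes a :: "nat \<Rightarrow> real"
  assumes pos: "0 < a 1" and mono: "\<And>i j. 1 \<le> i \<Longrightarrow> i < j \<Longrightarrow> j \<le> n \<Longrightarrow> a i < a j"
    and n: "n \<ge> 1" and S: "sadj n F G"
  shows "flip_adj a n (sorted_list_of_set F) (sorted_list_of_set G)"
proof -
  have gF: "good n F" and gG: "good n G" using S unfolding sadj_def by auto
  have mF: "monotone_path a n (sorted_list_of_set F)" using sl_mono[where a=a and n=n, OF pos mono n gF] .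
  have mG: "monotone_path a n (sorted_list_of_set G)" using sl_mono[where a=a and n=n, OF pos mono n gG] .
  obtain w where W: "(w \<notin> F \<and> G = insert w F) \<or> (w \<notin> G \<and> F = insert w G)" using S unfolding sadj_def by blast
  have ex: "\<exists>xs ys w. (sorted_list_of_set F = xs @ ys \<and> sorted_list_of_set G = xs @ w # ys) \<or>
                 (sorted_list_of_set G = xs @ ys \<and> sorted_list_of_set F = xs @ w # ys)"
  proof (cases "w \<notin> F \<and> G = insert w F")
    case True
    then obtain xs ys where "sorted_list_of_set F = xs @ ys" "sorted_list_of_set G = xs @ w # ys"
      using sl_insert_split[OF good_finite[OF gF], of w] by blast
    then show ?thesis by blast
  next
    case False
    then have F2: "w \<notin> G" "F = insert w G" using W by blast+
    then obtain xs ys where "sorted_list_of_set G = xs @ ys" "sorted_list_of_set F = xs @ w # ys"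
      using sl_insert_split[OF good_finite[OF gG], of w] by blast
    then show ?thesis by blast
  qed
  show ?thesis unfolding flip_adj_def by (intro conjI mF mG ex)
qed

lemma sadj_pow_flip:
  fixes a :: "nat \<Rightarrow> real"
  assumes pos: "0 < a 1" and mono: "\<And>i j. 1 \<le> i \<Longrightarrow> i < j \<Longrightarrow> j \<le> n \<Longrightarrow> a i < a j"
    and n: "n \<ge> 1"
  shows "(sadj n ^^ k) F G \<Longrightarrow> (flip_adj a n ^^ k) (sorted_list_of_set F) (sorted_list_of_set G)"
proof (induction k arbitrary: G)
  case 0
  then show ?case by simp
next
  case (Suc k)
  from Suc.prems obtain H where H: "(sadj n ^^ k) F H" "sadj n H G" by (rule relpowp_Suc_E)
  have 1: "(flip_adj a n ^^ k) (sorted_list_of_set F) (sorted_list_of_set H)" using Suc.IH H(1) .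
  have 2: "flip_adj a n (sorted_list_of_set H) (sorted_list_of_set G)"
    using sadj_flip[where a=a and n=n, OF pos mono n H(2)] .
  show ?case using 1 2 by (rule relpowp_Suc_I)
qed

definition reach :: "nat \<Rightarrow> int set \<Rightarrow> int set \<Rightarrow> nat \<Rightarrow> bool" where
  "reach n F G N \<longleftrightarrow> (\<exists>k\<le>N. (sadj n ^^ k) F G)"

lemma reach_refl: "reach n F F N"
  unfolding reach_def by (intro exI[of _ 0]) simp

lemma reach_step: "sadj n F G \<Longrightarrow> reach n G H N \<Longrightarrow> reach n F H (Suc N)"
proof -
  assume a1: "sadj n F G" and "reach n G H N"
  then obtain k where k: "k \<le> N" "(sadj n ^^ k) G H" unfolding reach_def by blast
  have "(sadj n ^^ Suc k) F H" using a1 k(2) by (rule relpowp_Suc_I2)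
  then show ?thesis unfolding reach_def using k(1) by (intro exI[of _ "Suc k"]) simp
qed

lemma reach_trans: "reach n F G N \<Longrightarrow> reach n G H M \<Longrightarrow> reach n F H (N + M)"
proof -
  assume "reach n F G N" "reach n G H M"
  then obtain k l where k: "k \<le> N" "(sadj n ^^ k) F G" and l: "l \<le> M" "(sadj n ^^ l) G H"
    unfolding reach_def by blast
  have "(sadj n ^^ (k + l)) F H" using k(2) l(2) by (rule relpowp_trans)
  then show ?thesis unfolding reach_def using k(1) l(1) by (intro exI[of _ "k + l"]) simp
qed

lemma reach_mono: "reach n F G N \<Longrightarrow> N \<le> M \<Longrightarrow> reach n F G M"
  unfolding reach_def using le_trans by blast

definition sd :: "'a set \<Rightarrow> 'a set \<Rightarrow> 'a set" where
  "sd A B = (A - B) \<union> (B - A)"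

lemma flip_pow_card:
  "(flip_adj a n ^^ k) p q \<Longrightarrow> card (sd (set p) (set q)) \<le> k"
proof (induction k arbitrary: q)
  case 0
  then show ?case by (simp add: sd_def)
next
  case (Suc k)
  from Suc.prems obtain r where R: "(flip_adj a n ^^ k) p r" "flip_adj a n r q" by (rule relpowp_Suc_E)
  have c1: "card (sd (set p) (set r)) \<le> k" using Suc.IH R(1) .
  obtain xs ys w where "(r = xs @ ys \<and> q = xs @ w # ys) \<or> (q = xs @ ys \<and> r = xs @ w # ys)"
    using R(2) unfolding flip_adj_def by blast
  then have "sd (set r) (set q) \<subseteq> {w}" unfolding sd_def by auto
  then have "card (sd (set r) (set q)) \<le> card {w}" by (intro card_mono) simp_all
  then have c2: "card (sd (set r) (set q)) \<le> 1" by simp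
  have "sd (set p) (set q) \<subseteq> sd (set p) (set r) \<union> sd (set r) (set q)" unfolding sd_def by auto
  then have "card (sd (set p) (set q)) \<le> card (sd (set p) (set r) \<union> sd (set r) (set q))"
    by (intro card_mono) (auto simp: sd_def)
  also have "\<dots> \<le> card (sd (set p) (set r)) + card (sd (set r) (set q))" by (rule card_Un_le)
  finally show ?case using c1 c2 by simp
qed

definition mlev :: "int set \<Rightarrow> int" where
  "mlev F = Min (abs ` F)"

lemma mlev_le: "finite F \<Longrightarrow> x \<in> F \<Longrightarrow> mlev F \<le> \<bar>x\<bar>"
  unfolding mlev_def by (rule Min_le) auto

lemma mlev_ge: "finite F \<Longrightarrow> F \<noteq> {} \<Longrightarrow> (\<And>y. y \<in> F \<Longrightarrow> k \<le> \<bar>y\<bar>) \<Longrightarrow> k \<le> mlev F"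
  unfolding mlev_def by (rule Min.boundedI) auto

lemma mlev_in: "finite F \<Longrightarrow> F \<noteq> {} \<Longrightarrow> \<exists>x\<in>F. \<bar>x\<bar> = mlev F"
proof -
  assume "finite F" "F \<noteq> {}"
  then have "Min (abs ` F) \<in> abs ` F" by (intro Min_in) auto
  then show ?thesis unfolding mlev_def by auto
qed

lemma good_nz: "good n F \<Longrightarrow> x \<in> F \<Longrightarrow> x \<noteq> 0 \<and> \<bar>x\<bar> \<le> int n"
  unfolding good_def cross_vertices_def by auto

lemma good_ne: "good n F \<Longrightarrow> F \<noteq> {}"
  unfolding good_def by auto

lemma good_low:
  assumes g: "good n F"
  shows "\<exists>s\<in>F. \<bar>s\<bar> = mlev F \<and> - s \<notin> F"
proof -
  have fin: "finite F" using good_finite[OF g] .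
  obtain x where x: "x \<in> F" "\<bar>x\<bar> = mlev F" using mlev_in[OF fin good_ne[OF g]] by blast
  have "- x \<notin> F"
  proof
    assume nx: "- x \<in> F"
    define i where "i = \<bar>x\<bar>"
    have "i > 0" using good_nz[OF g x(1)] unfolding i_def by simp
    have "- i \<in> F" "i \<in> F" using x(1) nx unfolding i_def by (cases "x \<ge> 0"; simp)+
    then obtain y where y: "y \<in> F" "-i < y" "y < i" using g \<open>i > 0\<close> unfolding good_def by blast
    have "mlev F \<le> \<bar>y\<bar>" using mlev_le[OF fin y(1)] .
    then show False using y x(2) unfolding i_def by linarith
  qed
  then show ?thesis using x by blast
qed

lemma good_abs_eq:
  assumes g: "good n F" and "x \<in> F" "y \<in> F" "\<bar>x\<bar> = mlev F" "\<bar>y\<bar> = mlev F"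
  shows "x = y"
proof -
  obtain s where s: "s \<in> F" "\<bar>s\<bar> = mlev F" "- s \<notin> F" using good_low[OF g] by blast
  have "x = s \<or> x = - s" "y = s \<or> y = - s" using assms(4,5) s(2) by linarith+
  then show ?thesis using assms(2,3) s(3) by auto
qed

definition okp :: "int set \<Rightarrow> int set \<Rightarrow> bool" where
  "okp S T \<longleftrightarrow> \<not> (\<exists>x. x \<in> S \<and> - x \<in> T \<and> \<bar>x\<bar> = mlev S \<and> \<bar>x\<bar> = mlev T)"

lemma okp_self: assumes g: "good n T" shows "okp T T"
  unfolding okp_def
proof
  assume "\<exists>x. x \<in> T \<and> - x \<in> T \<and> \<bar>x\<bar> = mlev T \<and> \<bar>x\<bar> = mlev T"
  then obtain x where x: "x \<in> T" "- x \<in> T" "\<bar>x\<bar> = mlev T" by blast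
  have "x = - x" using good_abs_eq[OF g x(1) x(2)] x(3) by simp
  then show False using good_nz[OF g x(1)] by simp
qed

definition flipx :: "int set \<Rightarrow> int \<Rightarrow> int set" where
  "flipx S x = (if x \<in> S then S - {x} else insert x S)"

lemma sd_flipx: "x \<in> sd S T \<Longrightarrow> sd (flipx S x) T = sd S T - {x}"
  unfolding sd_def flipx_def by auto

lemma sadj_flipx: "good n S \<Longrightarrow> good n (flipx S x) \<Longrightarrow> sadj n S (flipx S x)"
  unfolding sadj_def flipx_def
  by (cases "x \<in> S") (auto intro!: exI[of _ x] simp: insert_absorb)

lemma step_exists:
  assumes gS: "good n S" and gT: "good n T" and ok: "okp S T" and ne: "S \<noteq> T"
  shows "\<exists>x\<in>sd S T. good n (flipx S x) \<and> okp (flipx S x) T"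
proof -
  have finS: "finite S" using good_finite[OF gS] .
  have finT: "finite T" using good_finite[OF gT] .
  define m where "m = mlev S"
  obtain s where s: "s \<in> S" "\<bar>s\<bar> = m" "- s \<notin> S" using good_low[OF gS] unfolding m_def by blast
  have Sge: "\<And>y. y \<in> S \<Longrightarrow> m \<le> \<bar>y\<bar>" using mlev_le[OF finS] unfolding m_def by blast
  have Scross: "S \<subseteq> cross_vertices n" and Tcross: "T \<subseteq> cross_vertices n"
    using gS gT unfolding good_def by auto
  have nS: "- int n \<in> S" "int n \<in> S" and nT: "- int n \<in> T" "int n \<in> T"
    using gS gT unfolding good_def by auto
  have GS: "\<And>i. i > 0 \<Longrightarrow> -i \<in> S \<Longrightarrow> i \<in> S \<Longrightarrow> \<exists>y\<in>S. -i < y \<and> y < i"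
    using gS unfolding good_def by blast
  have GT: "\<And>i. i > 0 \<Longrightarrow> -i \<in> T \<Longrightarrow> i \<in> T \<Longrightarrow> \<exists>y\<in>T. -i < y \<and> y < i"
    using gT unfolding good_def by blast
  show ?thesis
  proof (cases "\<exists>x\<in>sd S T. \<bar>x\<bar> > m")
    case True
    then obtain x where x: "x \<in> sd S T" "\<bar>x\<bar> > m" by blast
    define S' where "S' = flipx S x"
    have xn: "x \<noteq> - int n" "x \<noteq> int n" using x(1) nS nT unfolding sd_def by auto
    have xT: "x \<notin> S \<Longrightarrow> x \<in> T" using x(1) unfolding sd_def by auto
    have S'sub: "S' \<subseteq> S \<union> {x}" "S - {x} \<subseteq> S'" unfolding S'_def flipx_def by auto
    have sS': "s \<in> S'" using s(1) S'sub(2) s(2) x(2) by auto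
    have S'ge: "\<And>y. y \<in> S' \<Longrightarrow> m \<le> \<bar>y\<bar>" using S'sub(1) Sge x(2) by fastforce
    have cr: "S' \<subseteq> cross_vertices n"
      using S'sub(1) Scross Tcross xT unfolding S'_def flipx_def by (cases "x \<in> S") auto
    have nS': "- int n \<in> S'" "int n \<in> S'" using nS xn S'sub(2) by auto
    have G': "\<forall>i>0. -i \<in> S' \<longrightarrow> i \<in> S' \<longrightarrow> (\<exists>y\<in>S'. -i < y \<and> y < i)"
    proof (intro allI impI)
      fix i :: int assume i: "i > 0" "-i \<in> S'" "i \<in> S'"
      show "\<exists>y\<in>S'. -i < y \<and> y < i"
      proof (cases "i > m")
        case True
        then show ?thesis using sS' s(2) by (intro bexI[of _ s]) auto
      next
        case False
        then have "-i \<noteq> x" "i \<noteq> x" using x(2) i(1) by auto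
        then have "-i \<in> S" "i \<in> S" using i S'sub(1) by auto
        then have "i = m" using Sge[of i] False i(1) by auto
        then have "s = i \<or> s = -i" using s(2) by auto
        then show ?thesis using s(3) \<open>-i \<in> S\<close> \<open>i \<in> S\<close> by auto
      qed
    qed
    have gS': "good n S'" unfolding good_def using cr nS' G' by blast
    have finS': "finite S'" using good_finite[OF gS'] .
    have mS': "mlev S' = m"
    proof (rule antisym)
      show "mlev S' \<le> m" using mlev_le[OF finS' sS'] s(2) by simp
      show "m \<le> mlev S'" using mlev_ge[OF finS' good_ne[OF gS'] S'ge] .
    qed
    have "okp S' T"
      unfolding okp_def
    proof
      assume "\<exists>y. y \<in> S' \<and> - y \<in> T \<and> \<bar>y\<bar> = mlev S' \<and> \<bar>y\<bar> = mlev T"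
      then obtain y where y: "y \<in> S'" "- y \<in> T" "\<bar>y\<bar> = mlev S'" "\<bar>y\<bar> = mlev T" by blast
      have "y \<noteq> x" using y(3) mS' x(2) by auto
      then have "y \<in> S" using y(1) S'sub(1) by auto
      then show False using ok y mS' unfolding okp_def m_def by auto
    qed
    then show ?thesis using x(1) gS' unfolding S'_def by blast
  next
    case False
    then have le: "\<And>x. x \<in> sd S T \<Longrightarrow> \<bar>x\<bar> \<le> m" by force
    show ?thesis
    proof (cases "\<exists>y\<in>T - S. \<bar>y\<bar> < m")
      case True
      then obtain y where y: "y \<in> T" "y \<notin> S" "\<bar>y\<bar> < m" by blast
      define mt where "mt = mlev T"
      obtain t where t: "t \<in> T" "\<bar>t\<bar> = mt" "- t \<notin> T" using good_low[OF gT] unfolding mt_def by blast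
      have "mt \<le> \<bar>y\<bar>" using mlev_le[OF finT y(1)] unfolding mt_def .
      then have tm: "\<bar>t\<bar> < m" using t(2) y(3) by simp
      have tS: "t \<notin> S" using Sge tm by force
      have tsd: "t \<in> sd S T" using tS t(1) unfolding sd_def by auto
      define S' where "S' = insert t S"
      have S'eq: "flipx S t = S'" unfolding S'_def flipx_def using tS by simp
      have cr: "S' \<subseteq> cross_vertices n" using Scross Tcross t(1) unfolding S'_def by auto
      have nS': "- int n \<in> S'" "int n \<in> S'" using nS unfolding S'_def by auto
      have G': "\<forall>i>0. -i \<in> S' \<longrightarrow> i \<in> S' \<longrightarrow> (\<exists>z\<in>S'. -i < z \<and> z < i)"
      proof (intro allI impI)
        fix i :: int assume i: "i > 0" "-i \<in> S'" "i \<in> S'"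
        show "\<exists>z\<in>S'. -i < z \<and> z < i"
        proof (cases "-i \<in> S \<and> i \<in> S")
          case True
          then show ?thesis using GS[OF i(1)] unfolding S'_def by auto
        next
          case False
          then have "(-i = t \<and> i \<in> S) \<or> (i = t \<and> -i \<in> S)" using i unfolding S'_def by auto
          then have "\<exists>z\<in>S. \<bar>z\<bar> = \<bar>t\<bar>" by (elim disjE) (metis abs_minus_cancel)+
          then show ?thesis using Sge tm by force
        qed
      qed
      have gS': "good n S'" unfolding good_def using cr nS' G' by blast
      have finS': "finite S'" using good_finite[OF gS'] .
      have S'ge: "\<And>z. z \<in> S' \<Longrightarrow> mt \<le> \<bar>z\<bar>" using Sge tm t(2) unfolding S'_def by fastforce
      have mS': "mlev S' = mt"
      proof (rule antisym)
        show "mlev S' \<le> mt" using mlev_le[OF finS', of t] t(2) unfolding S'_def by simp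
        show "mt \<le> mlev S'" using mlev_ge[OF finS' good_ne[OF gS'] S'ge] .
      qed
      have "okp S' T"
        unfolding okp_def
      proof
        assume "\<exists>z. z \<in> S' \<and> - z \<in> T \<and> \<bar>z\<bar> = mlev S' \<and> \<bar>z\<bar> = mlev T"
        then obtain z where z: "z \<in> S'" "- z \<in> T" "\<bar>z\<bar> = mlev S'" by blast
        have "z \<noteq> t" using z(2) t(3) by auto
        then have "z \<in> S" using z(1) unfolding S'_def by auto
        then show False using Sge[of z] z(3) mS' tm t(2) by simp
      qed
      then show ?thesis using tsd gS' S'eq by metis
    next
      case False
      then have Tge: "\<And>y. y \<in> T \<Longrightarrow> y \<notin> S \<Longrightarrow> m \<le> \<bar>y\<bar>" by force
      have eqm: "\<And>x. x \<in> sd S T \<Longrightarrow> \<bar>x\<bar> = m"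
      proof -
        fix x assume x: "x \<in> sd S T"
        have "m \<le> \<bar>x\<bar>" using x Sge Tge unfolding sd_def by auto
        then show "\<bar>x\<bar> = m" using le[OF x] by simp
      qed
      have sT: "s \<notin> T"
      proof
        assume sT: "s \<in> T"
        obtain x where x: "x \<in> sd S T" using ne unfolding sd_def by blast
        have "x = s \<or> x = - s" using eqm[OF x] s(2) by linarith
        then have "x = - s" using sT s(1) x unfolding sd_def by auto
        then have "- s \<in> T" using x s(3) unfolding sd_def by auto
        define i where "i = \<bar>s\<bar>"
        have "i > 0" using good_nz[OF gS s(1)] unfolding i_def by simp
        have "- i \<in> T" "i \<in> T" using sT \<open>-s \<in> T\<close> unfolding i_def by (cases "s \<ge> 0"; simp)+
        then obtain y where y: "y \<in> T" "-i < y" "y < i" using GT[OF \<open>i > 0\<close>] by blast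
        have "\<bar>y\<bar> < m" using y s(2) unfolding i_def by linarith
        then show False using Sge Tge y(1) by force
      qed
      have msT: "- s \<notin> T"
      proof
        assume msT: "- s \<in> T"
        have Tge2: "\<And>y. y \<in> T \<Longrightarrow> m \<le> \<bar>y\<bar>" using Sge Tge by blast
        have "mlev T = m"
        proof (rule antisym)
          show "mlev T \<le> m" using mlev_le[OF finT msT] s(2) by simp
          show "m \<le> mlev T" using mlev_ge[OF finT good_ne[OF gT] Tge2] .
        qed
        then show False using ok s(1) msT s(2) unfolding okp_def m_def by auto
      qed
      have T_eq: "T = S - {s}"
      proof
        show "T \<subseteq> S - {s}"
        proof
          fix z assume z: "z \<in> T"
          show "z \<in> S - {s}"
          proof (rule ccontr)
            assume "z \<notin> S - {s}"
            then have "z \<notin> S" using z sT by auto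
            then have "z \<in> sd S T" using z unfolding sd_def by auto
            then have "z = s \<or> z = - s" using eqm s(2) by force
            then show False using z sT msT by auto
          qed
        qed
        show "S - {s} \<subseteq> T"
        proof
          fix z assume z: "z \<in> S - {s}"
          show "z \<in> T"
          proof (rule ccontr)
            assume "z \<notin> T"
            then have "z \<in> sd S T" using z unfolding sd_def by auto
            then have "z = s \<or> z = - s" using eqm s(2) by force
            then show False using z s(3) by auto
          qed
        qed
      qed
      have fl: "flipx S s = T" unfolding flipx_def using s(1) T_eq by simp
      have "s \<in> sd S T" using s(1) sT unfolding sd_def by auto
      then show ?thesis using fl gT okp_self[OF gT] by auto
    qed
  qed
qed

lemma finite_sd: "finite A \<Longrightarrow> finite B \<Longrightarrow> finite (sd A B)"
  unfolding sd_def by auto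

lemma greedy:
  "card (sd S T) = N \<Longrightarrow> good n S \<Longrightarrow> good n T \<Longrightarrow> okp S T \<Longrightarrow> reach n S T N"
proof (induction N arbitrary: S)
  case 0
  have "finite (sd S T)" using finite_sd good_finite "0.prems" by blast
  then have "sd S T = {}" using "0.prems"(1) by simp
  then have "S = T" unfolding sd_def by auto
  then show ?case by (simp add: reach_refl)
next
  case (Suc N)
  have fin: "finite (sd S T)" using finite_sd good_finite Suc.prems by blast
  have "sd S T \<noteq> {}" using Suc.prems(1) by auto
  then have ne: "S \<noteq> T" unfolding sd_def by auto
  obtain x where x: "x \<in> sd S T" "good n (flipx S x)" "okp (flipx S x) T"
    using step_exists[OF Suc.prems(2,3,4) ne] by blast
  have "card (sd (flipx S x) T) = N" using sd_flipx[OF x(1)] Suc.prems(1) x(1) fin by simp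
  then have r: "reach n (flipx S x) T N" using Suc.IH x(2) Suc.prems(3) x(3) by blast
  have "sadj n S (flipx S x)" using sadj_flipx[OF Suc.prems(2) x(2)] .
  then show ?case using r by (rule reach_step)
qed

definition Inner :: "nat \<Rightarrow> int set" where
  "Inner n = cross_vertices n - {- int n, int n}"

lemma Inner_eq: "Inner n = {- int n + 1 .. -1} \<union> {1 .. int n - 1}"
  unfolding Inner_def cross_vertices_def by auto

lemma card_Inner: "card (Inner n) = 2 * (n - 1)"
proof -
  have d: "{- int n + 1 .. -1} \<inter> {1 .. int n - 1} = {}" by auto
  have "card (Inner n) = card {- int n + 1 .. -1} + card {1 .. int n - 1}"
    unfolding Inner_eq using d by (simp add: card_Un_disjoint)
  also have "\<dots> = nat (int n - 1) + nat (int n - 1)" by simp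
  also have "\<dots> = 2 * (n - 1)" by linarith
  finally show ?thesis .
qed

lemma finite_Inner: "finite (Inner n)"
  unfolding Inner_eq by simp

lemma sd_Inner: "good n S \<Longrightarrow> good n T \<Longrightarrow> sd S T \<subseteq> Inner n"
  unfolding good_def sd_def Inner_def by auto

lemma card_as_sum:
  assumes "finite U" "A \<subseteq> U"
  shows "card A = (\<Sum>z\<in>U. if z \<in> A then 1 else 0 :: nat)"
proof -
  have "A = {z\<in>U. z \<in> A}" using assms(2) by auto
  then have "card A = (\<Sum>z\<in>{z\<in>U. z \<in> A}. 1 :: nat)" by simp
  also have "\<dots> = (\<Sum>z\<in>U. if z \<in> A then 1 else 0 :: nat)" using assms(1) by (rule sum.inter_filter)
  finally show ?thesis .
qed

lemma good_no_pm1: "good n S \<Longrightarrow> \<not> (1 \<in> S \<and> -1 \<in> S)"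
proof
  assume g: "good n S" and h: "1 \<in> S \<and> -1 \<in> S"
  have "\<forall>i>0. -i \<in> S \<longrightarrow> i \<in> S \<longrightarrow> (\<exists>x\<in>S. -i < x \<and> x < i)" using g unfolding good_def by blast
  then have "\<exists>x\<in>S. -1 < x \<and> x < (1::int)" using h by (metis zero_less_one)
  then obtain y where "y \<in> S" "-1 < y" "y < (1::int)" by blast
  then have "y = 0" by simp
  then show False using good_nz[OF g \<open>y \<in> S\<close>] by simp
qed

lemma upper:
  assumes n3: "n \<ge> 3" and gS: "good n S" and gT: "good n T"
  shows "reach n S T (2 * (n - 1))"
proof (cases "okp S T")
  case True
  have "reach n S T (card (sd S T))" using greedy[OF refl gS gT True] .
  moreover have "card (sd S T) \<le> 2 * (n - 1)"
    using card_mono[OF finite_Inner sd_Inner[OF gS gT]] card_Inner by simp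
  ultimately show ?thesis by (rule reach_mono)
next
  case False
  then obtain x where x: "x \<in> S" "- x \<in> T" "\<bar>x\<bar> = mlev S" "\<bar>x\<bar> = mlev T" unfolding okp_def by blast
  have finS: "finite S" using good_finite[OF gS] .
  have finT: "finite T" using good_finite[OF gT] .
  have Sge: "\<And>y. y \<in> S \<Longrightarrow> \<bar>x\<bar> \<le> \<bar>y\<bar>" using mlev_le[OF finS] x(3) by simp
  have Tge: "\<And>y. y \<in> T \<Longrightarrow> \<bar>x\<bar> \<le> \<bar>y\<bar>" using mlev_le[OF finT] x(4) by simp
  have x0: "x \<noteq> 0" using good_nz[OF gS x(1)] by simp
  have GS: "\<And>i. i > 0 \<Longrightarrow> -i \<in> S \<Longrightarrow> i \<in> S \<Longrightarrow> \<exists>y\<in>S. -i < y \<and> y < i"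
    using gS unfolding good_def by blast
  have nS: "- int n \<in> S" "int n \<in> S" using gS unfolding good_def by auto
  have Scross: "S \<subseteq> cross_vertices n" using gS unfolding good_def by auto
  show ?thesis
  proof (cases "\<bar>x\<bar> \<ge> 2")
    case True
    have n1: "1 \<notin> S" "-1 \<notin> S" "1 \<notin> T" "-1 \<notin> T"
      using Sge[of 1] Sge[of "-1"] Tge[of 1] Tge[of "-1"] True by auto
    define M where "M = insert 1 S"
    have cr: "M \<subseteq> cross_vertices n" using Scross n3 unfolding M_def cross_vertices_def by auto
    have nM: "- int n \<in> M" "int n \<in> M" using nS unfolding M_def by auto
    have G': "\<forall>i>0. -i \<in> M \<longrightarrow> i \<in> M \<longrightarrow> (\<exists>y\<in>M. -i < y \<and> y < i)"
    proof (intro allI impI)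
      fix i :: int assume i: "i > 0" "-i \<in> M" "i \<in> M"
      have "-i \<noteq> 1" using i(1) by simp
      then have "-i \<in> S" using i(2) unfolding M_def by simp
      then have "i \<noteq> 1" using n1 by auto
      then have "i \<in> S" using i(3) unfolding M_def by simp
      obtain y where "y \<in> S" "-i < y" "y < i" using GS[OF i(1) \<open>-i \<in> S\<close> \<open>i \<in> S\<close>] by blast
      then show "\<exists>y\<in>M. -i < y \<and> y < i" unfolding M_def by blast
    qed
    have gM: "good n M" unfolding good_def using cr nM G' by blast
    have finM: "finite M" using good_finite[OF gM] .
    have "1 \<in> M" unfolding M_def by simp
    then have "mlev M \<le> 1" using mlev_le[OF finM] by fastforce
    then have okM: "okp M T" unfolding okp_def using x(4) True by auto
    have "1 \<notin> S \<and> M = insert 1 S" using n1 unfolding M_def by simp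
    then have sadjSM: "sadj n S M" unfolding sadj_def using gS gM by blast
    have r1: "reach n M T (card (sd M T))" using greedy[OF refl gM gT okM] .
    have sub: "sd M T \<subseteq> Inner n - {-1}" using sd_Inner[OF gM gT] n1 unfolding sd_def M_def by auto
    have m1: "-1 \<in> Inner n" using n3 unfolding Inner_eq by auto
    have "card (sd M T) \<le> card (Inner n - {-1})"
      using card_mono[OF _ sub] finite_Inner by blast
    also have "\<dots> = 2 * (n - 1) - 1" using card_Diff_singleton[OF m1] card_Inner by simp
    finally have "card (sd M T) \<le> 2 * (n - 1) - 1" .
    then have "reach n M T (2 * (n - 1) - 1)" using r1 reach_mono by blast
    then have "reach n S T (Suc (2 * (n - 1) - 1))" using reach_step[OF sadjSM] by blast
    moreover have "Suc (2 * (n - 1) - 1) = 2 * (n - 1)" using n3 by simp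
    ultimately show ?thesis by simp
  next
    case False
    then have x1: "\<bar>x\<bar> = 1" using x0 by linarith
    define c :: int where "c = (if 2 \<in> S \<and> 2 \<in> T then 2 else if -2 \<in> S \<and> -2 \<in> T then -2
                              else if 2 \<in> S \<or> 2 \<in> T then 2 else -2)"
    have c: "c = 2 \<or> c = -2" unfolding c_def by auto
    have ac: "\<bar>c\<bar> = 2" using c by auto
    define M where "M = {y \<in> S. 3 \<le> \<bar>y\<bar>} \<union> {c}"
    have cr: "M \<subseteq> cross_vertices n" using Scross n3 ac unfolding M_def cross_vertices_def by auto
    have nM: "- int n \<in> M" "int n \<in> M" using nS n3 unfolding M_def by auto
    have Mlev: "\<And>y. y \<in> M \<Longrightarrow> y \<noteq> c \<Longrightarrow> 3 \<le> \<bar>y\<bar>" unfolding M_def by auto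
    have G': "\<forall>i>0. -i \<in> M \<longrightarrow> i \<in> M \<longrightarrow> (\<exists>y\<in>M. -i < y \<and> y < i)"
    proof (intro allI impI)
      fix i :: int assume i: "i > 0" "-i \<in> M" "i \<in> M"
      have "-i \<noteq> c \<or> i \<noteq> c" using i(1) by auto
      then have "3 \<le> i"
      proof
        assume "-i \<noteq> c"
        then have "3 \<le> \<bar>-i\<bar>" using Mlev i(2) by blast
        then show ?thesis using i(1) by simp
      next
        assume "i \<noteq> c"
        then have "3 \<le> \<bar>i\<bar>" using Mlev i(3) by blast
        then show ?thesis using i(1) by simp
      qed
      moreover have "c \<in> M" unfolding M_def by simp
      ultimately show "\<exists>y\<in>M. -i < y \<and> y < i" using ac by (intro bexI[of _ c]) auto
    qed
    have gM: "good n M" unfolding good_def using cr nM G' by blast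
    have finM: "finite M" using good_finite[OF gM] .
    have mM: "mlev M = 2"
    proof (rule antisym)
      show "mlev M \<le> 2" using mlev_le[OF finM, of c] ac unfolding M_def by simp
      show "2 \<le> mlev M" using mlev_ge[OF finM good_ne[OF gM]] Mlev ac by force
    qed
    have ok1: "okp S M" unfolding okp_def using mM x(3) x1 by auto
    have ok2: "okp M T" unfolding okp_def using mM x(4) x1 by auto
    have r: "reach n S T (card (sd S M) + card (sd M T))"
      using reach_trans[OF greedy[OF refl gS gM ok1] greedy[OF refl gM gT ok2]] .
    define U where "U = Inner n"
    define g where "g z = (if z \<in> sd S M then 1 else 0) + (if z \<in> sd M T then 1 else (0::nat))" for z
    have finU: "finite U" unfolding U_def by (rule finite_Inner)
    have "card (sd S M) + card (sd M T) = (\<Sum>z\<in>U. g z)"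
      unfolding g_def sum.distrib
      using card_as_sum[OF finU sd_Inner[OF gS gM, folded U_def]] card_as_sum[OF finU sd_Inner[OF gM gT, folded U_def]]
      by simp
    also have "\<dots> = g 2 + g (-2) + (\<Sum>z\<in>U - {2} - {-2}. g z)"
    proof -
      have u2: "2 \<in> U" "-2 \<in> U - {2}" using n3 unfolding U_def Inner_eq by auto
      have "(\<Sum>z\<in>U. g z) = g 2 + (\<Sum>z\<in>U - {2}. g z)" using sum.remove[OF finU u2(1)] .
      also have "(\<Sum>z\<in>U - {2}. g z) = g (-2) + (\<Sum>z\<in>U - {2} - {-2}. g z)"
        using sum.remove[OF _ u2(2)] finU by simp
      finally show ?thesis by simp
    qed
    also have "\<dots> \<le> 2 + 2 * (n - 1) - 2"
    proof -
      have m2: "(2 \<in> M) = (c = 2)" "(-2 \<in> M) = (c = -2)" unfolding M_def by auto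
      have g22: "g 2 + g (-2) \<le> 2"
        unfolding g_def sd_def using m2 unfolding c_def by (auto split: if_splits)
      have pw: "\<And>z. z \<in> U - {2} - {-2} \<Longrightarrow> g z \<le> 1"
      proof -
        fix z assume z: "z \<in> U - {2} - {-2}"
        have z0: "z \<noteq> 0" using z unfolding U_def Inner_def cross_vertices_def by auto
        show "g z \<le> 1"
        proof (cases "3 \<le> \<bar>z\<bar>")
          case True
          then have "z \<in> M \<longleftrightarrow> z \<in> S" unfolding M_def using ac by auto
          then show ?thesis unfolding g_def sd_def by auto
        next
          case False
          then have z1: "\<bar>z\<bar> = 1" using z z0 by auto
          then have "z \<notin> M" using Mlev ac by force
          have "\<not> (z \<in> S \<and> z \<in> T)"
          proof
            assume zz: "z \<in> S \<and> z \<in> T"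
            have "z = x \<or> z = - x" using z1 x1 by linarith
            then show False
            proof
              assume "z = x"
              then have "x \<in> T" "-x \<in> T" using zz x(2) by auto
              then show False using good_no_pm1[OF gT] x1 by (cases "x \<ge> 0") auto
            next
              assume "z = - x"
              then have "x \<in> S" "-x \<in> S" using zz x(1) by auto
              then show False using good_no_pm1[OF gS] x1 by (cases "x \<ge> 0") auto
            qed
          qed
          then show ?thesis unfolding g_def sd_def using \<open>z \<notin> M\<close> by auto
        qed
      qed
      have "(\<Sum>z\<in>U - {2} - {-2}. g z) \<le> (\<Sum>z\<in>U - {2} - {-2}. 1)" using pw by (rule sum_mono)
      also have "\<dots> = card (U - {2} - {-2})" by simp
      also have "\<dots> = 2 * (n - 1) - 2"
      proof -
        have u2: "2 \<in> U" "-2 \<in> U - {2}" using n3 unfolding U_def Inner_eq by auto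
        have "card (U - {2}) = 2 * (n - 1) - 1" using card_Diff_singleton[OF u2(1)] card_Inner unfolding U_def by simp
        then show ?thesis using card_Diff_singleton[OF u2(2)] by simp
      qed
      finally have "(\<Sum>z\<in>U - {2} - {-2}. g z) \<le> 2 * (n - 1) - 2" .
      then show ?thesis using g22 n3 by arith
    qed
    also have "\<dots> = 2 * (n - 1)" using n3 by simp
    finally show ?thesis using r reach_mono by blast
  qed
qed

lemma good_S0:
  assumes n3: "n \<ge> 3"
  shows "good n ({- int n .. -1} \<union> {int n})"
  unfolding good_def
proof (intro conjI allI impI)
  show "{- int n .. -1} \<union> {int n} \<subseteq> cross_vertices n" unfolding cross_vertices_def using n3 by auto
  show "- int n \<in> {- int n .. -1} \<union> {int n}" using n3 by auto
  show "int n \<in> {- int n .. -1} \<union> {int n}" by simp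
  fix i :: int assume i: "0 < i" "- i \<in> {- int n .. -1} \<union> {int n}" "i \<in> {- int n .. -1} \<union> {int n}"
  then have "i = int n" by auto
  then show "\<exists>x\<in>{- int n .. -1} \<union> {int n}. - i < x \<and> x < i" using n3 by (intro bexI[of _ "-1"]) auto
qed

lemma good_T0:
  assumes n3: "n \<ge> 3"
  shows "good n ({- int n} \<union> {1 .. int n})"
  unfolding good_def
proof (intro conjI allI impI)
  show "{- int n} \<union> {1 .. int n} \<subseteq> cross_vertices n" unfolding cross_vertices_def using n3 by auto
  show "- int n \<in> {- int n} \<union> {1 .. int n}" by simp
  show "int n \<in> {- int n} \<union> {1 .. int n}" using n3 by auto
  fix i :: int assume i: "0 < i" "- i \<in> {- int n} \<union> {1 .. int n}" "i \<in> {- int n} \<union> {1 .. int n}"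
  then have "i = int n" by auto
  then show "\<exists>x\<in>{- int n} \<union> {1 .. int n}. - i < x \<and> x < i" using n3 by (intro bexI[of _ "1"]) auto
qed

lemma sd_S0_T0:
  assumes n3: "n \<ge> 3"
  shows "sd ({- int n .. -1} \<union> {int n}) ({- int n} \<union> {1 .. int n}) = Inner n"
  unfolding sd_def Inner_eq using n3 by auto

theorem main:
  fixes a :: "nat \<Rightarrow> real" and n :: nat
  assumes n3: "n \<ge> 3"
    and pos: "0 < a 1"
    and mono: "\<And>i j. 1 \<le> i \<Longrightarrow> i < j \<Longrightarrow> j \<le> n \<Longrightarrow> a i < a j"
  shows "flip_diameter a n = enat (2 * (n - 1))"
proof -
  have n1: "n \<ge> 1" using n3 by simp
  have le: "flip_dist a n p q \<le> enat (2 * (n - 1))" if p: "monotone_path a n p" and q: "monotone_path a n q" for p q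
  proof -
    have sp: "sorted_list_of_set (set p) = p" "good n (set p)" using sl_set[where a=a and n=n, OF pos mono n1 p] by auto
    have sq: "sorted_list_of_set (set q) = q" "good n (set q)" using sl_set[where a=a and n=n, OF pos mono n1 q] by auto
    obtain k where k: "k \<le> 2 * (n - 1)" "(sadj n ^^ k) (set p) (set q)"
      using upper[OF n3 sp(2) sq(2)] unfolding reach_def by blast
    have "(flip_adj a n ^^ k) p q" using sadj_pow_flip[where a=a and n=n, OF pos mono n1 k(2)] sp(1) sq(1) by simp
    then have "flip_dist a n p q \<le> enat k" unfolding flip_dist_def by (intro INF_lower) simp
    also have "\<dots> \<le> enat (2 * (n - 1))" using k(1) by simp
    finally show ?thesis .
  qed
  define S0 where "S0 = {- int n .. -1} \<union> {int n}"
  define T0 where "T0 = {- int n} \<union> {1 .. int n}"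
  have gS0: "good n S0" unfolding S0_def using good_S0[OF n3] .
  have gT0: "good n T0" unfolding T0_def using good_T0[OF n3] .
  define p0 where "p0 = sorted_list_of_set S0"
  define q0 where "q0 = sorted_list_of_set T0"
  have mp0: "monotone_path a n p0" unfolding p0_def using sl_mono[where a=a and n=n, OF pos mono n1 gS0] .
  have mq0: "monotone_path a n q0" unfolding q0_def using sl_mono[where a=a and n=n, OF pos mono n1 gT0] .
  have setp0: "set p0 = S0" unfolding p0_def using good_finite[OF gS0] by simp
  have setq0: "set q0 = T0" unfolding q0_def using good_finite[OF gT0] by simp
  have ge: "enat (2 * (n - 1)) \<le> flip_dist a n p0 q0"
    unfolding flip_dist_def
  proof (rule INF_greatest)
    fix k assume "k \<in> {k. (flip_adj a n ^^ k) p0 q0}"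
    then have "card (sd (set p0) (set q0)) \<le> k" using flip_pow_card by blast
    then have "card (Inner n) \<le> k" using setp0 setq0 sd_S0_T0[OF n3] unfolding S0_def T0_def by simp
    then show "enat (2 * (n - 1)) \<le> enat k" using card_Inner by simp
  qed
  show ?thesis
    unfolding flip_diameter_def
  proof (rule antisym)
    show "(SUP (p, q) \<in> {(p, q). monotone_path a n p \<and> monotone_path a n q}. flip_dist a n p q) \<le> enat (2 * (n - 1))"
      by (rule SUP_least) (use le in auto)
    show "enat (2 * (n - 1)) \<le> (SUP (p, q) \<in> {(p, q). monotone_path a n p \<and> monotone_path a n q}. flip_dist a n p q)"
      by (rule SUP_upper2[of "(p0, q0)"]) (use mp0 mq0 ge in auto)
  qed
qed


theorem theorem1p1:
  fixes a :: "nat \<Rightarrow> real" and n :: nat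
  assumes "n \<ge> 3"
    and "0 < a 1"
    and "\<And>i j. 1 \<le> i \<Longrightarrow> i < j \<Longrightarrow> j \<le> n \<Longrightarrow> a i < a j"
  shows "flip_diameter a n = enat (2 * (n - 1))"
  using main[where a=a and n=n, OF assms] .

end
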